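(* Let $\varphi\colon\mathbb{R}\to[0,\infty)$ be a deformed exponential and $\{u_{0,i}\}_{i\ge1}\subset(0,\infty)$. Suppose there do not exist $\alpha\in(0,1)$, $\varepsilon>0$ and a sequence $\{c_i\}\subseteq\mathbb{R}\cup\{-\infty\}$ with $\sum_{i}\varphi(c_i)<\infty$ such that for every $i$, $\alpha\varphi(u)\le\varphi(u-u_{0,i})$ for all real $u>c_i$ with $\varphi(u-u_{0,i})<\varepsilon$. Then there exist pairwise disjoint sets $A_n\subseteq\mathbb{N}$ ($n\ge1$) and real numbers $c_{n,i}$ ($n\ge1$, $i\in A_n$) such that for each $n\ge1$ \[ \frac12\le\sum_{i\in A_n}\varphi(c_{n,i})\qquad\text{and}\qquad\sum_{i\in A_n}\varphi(c_{n,i}-u_{0,i})\le 2^{-n}. \] *)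

theory Defs
  imports "HOL-Analysis.Analysis"
begin

definition deformed_exp :: "(real \<Rightarrow> real) \<Rightarrow> bool" where
  "deformed_exp \<phi> \<longleftrightarrow> (\<forall>u. 0 \<le> \<phi> u) \<and> convex_on UNIV \<phi> \<and>
     (\<phi> \<longlongrightarrow> 0) at_bot \<and> filterlim \<phi> at_top at_top"

definition phi_ext :: "(real \<Rightarrow> real) \<Rightarrow> ereal \<Rightarrow> real" where
  "phi_ext \<phi> x = (if x = - \<infinity> then 0 else \<phi> (real_of_ereal x))"

end

theory Submission
  imports Defs
begin

lemma de_mono:
  assumes de: "deformed_exp \<phi>" and xy: "x \<le> y"
  shows "\<phi> x \<le> \<phi> y"
proof (rule ccontr)
  assume "\<not> \<phi> x \<le> \<phi> y"
  hence lt: "\<phi> y < \<phi> x" by simp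
  have nn: "\<And>u. 0 \<le> \<phi> u" and cv: "convex_on UNIV \<phi>" and lim: "(\<phi> \<longlongrightarrow> 0) at_bot"
    using de by (auto simp: deformed_exp_def)
  have xy': "x < y" using xy lt by (cases "x = y") auto
  have ge: "\<phi> x \<le> \<phi> z" if zx: "z < x" for z
  proof (rule ccontr)
    assume "\<not> \<phi> x \<le> \<phi> z"
    hence z: "\<phi> z < \<phi> x" by simp
    define a where "a = (y - x) / (y - z)"
    define b where "b = (x - z) / (y - z)"
    have a0: "a > 0" "b > 0" using zx xy' by (auto simp: a_def b_def)
    have yz: "y - z \<noteq> 0" using zx xy' by simp
    have ab: "a + b = 1" using yz by (simp add: a_def b_def add_divide_distrib[symmetric])
    have "(y - x) * z + (x - z) * y = x * (y - z)" by (simp add: algebra_simps)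
    hence xe: "a *\<^sub>R z + b *\<^sub>R y = x" using yz
      by (simp add: a_def b_def add_divide_distrib[symmetric] divide_eq_eq)
    have "\<phi> x \<le> a * \<phi> z + b * \<phi> y"
      using cv a0 ab xe unfolding convex_on_def by (metis UNIV_I less_eq_real_def)
    also have "\<dots> < a * \<phi> x + b * \<phi> x"
      using a0 z lt by (intro add_less_le_mono) auto
    also have "\<dots> = \<phi> x" using ab by (simp add: algebra_simps flip: distrib_right)
    finally show False by simp
  qed
  have pos: "\<phi> x > 0" using nn[of y] lt by simp
  have "eventually (\<lambda>z. \<phi> z < \<phi> x) at_bot"
    using order_tendstoD(2)[OF lim pos] .
  then obtain z0 where z0: "\<And>z. z \<le> z0 \<Longrightarrow> \<phi> z < \<phi> x" by (auto simp: eventually_at_bot_linorder)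
  have "\<phi> (min z0 (x - 1)) < \<phi> x" by (rule z0) simp
  moreover have "\<phi> x \<le> \<phi> (min z0 (x - 1))" by (rule ge) simp
  ultimately show False by simp
qed

lemma de_cont:
  assumes de: "deformed_exp \<phi>" shows "isCont \<phi> x"
proof -
  have "continuous_on UNIV \<phi>"
    using de by (intro convex_on_continuous) (auto simp: deformed_exp_def)
  thus ?thesis by (simp add: continuous_on_eq_continuous_at)
qed

lemma de_big:
  assumes de: "deformed_exp \<phi>" obtains x0 where "\<And>x. x \<ge> x0 \<Longrightarrow> \<phi> x \<ge> e"
proof -
  have "filterlim \<phi> at_top at_top" using de by (simp add: deformed_exp_def)
  hence "eventually (\<lambda>x. \<phi> x \<ge> e) at_top" by (simp add: filterlim_at_top)
  thus ?thesis using that by (auto simp: eventually_at_top_linorder)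
qed

lemma prefix_sum:
  fixes g :: "nat \<Rightarrow> real"
  assumes "finite B" "\<forall>i\<in>B. 0 \<le> g i \<and> g i < 1/2" "1/2 \<le> sum g B"
  shows "\<exists>B'\<subseteq>B. 1/2 \<le> sum g B' \<and> sum g B' \<le> 1"
  using assms
proof (induction B rule: finite_induct)
  case empty thus ?case by simp
next
  case (insert x B)
  show ?case
  proof (cases "1/2 \<le> sum g B")
    case True
    with insert show ?thesis by auto
  next
    case False
    thus ?thesis using insert by (intro exI[of _ "insert x B"]) auto
  qed
qed

lemma stage:
  fixes \<phi> :: "real \<Rightarrow> real" and u0 :: "nat \<Rightarrow> real" and \<delta> :: real and E :: "nat set"
  assumes de: "deformed_exp \<phi>"
    and H: "\<not> (\<exists>\<alpha> \<epsilon> (c :: nat \<Rightarrow> ereal). 0 < \<alpha> \<and> \<alpha> < 1 \<and> 0 < \<epsilon> \<and>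
             (\<forall>i\<ge>1. c i \<noteq> \<infinity>) \<and>
             (\<Sum>\<^sub>\<infinity>i\<in>{1..}. ennreal (phi_ext \<phi> (c i))) < \<infinity> \<and>
             (\<forall>i\<ge>1. \<forall>u::real. ereal u > c i \<and> \<phi> (u - u0 i) < \<epsilon> \<longrightarrow>
                 \<alpha> * \<phi> u \<le> \<phi> (u - u0 i)))"
    and d0: "0 < \<delta>" and d1: "\<delta> < 1" and fE: "finite E"
  shows "\<exists>B c. finite B \<and> B \<subseteq> {1..} \<and> B \<inter> E = {} \<and> 1/2 \<le> (\<Sum>i\<in>B. \<phi> (c i))
            \<and> (\<Sum>i\<in>B. \<phi> (c i - u0 i)) \<le> \<delta>"
proof (rule ccontr)
  assume N: "\<not> ?thesis"
  have nn: "\<And>u. 0 \<le> \<phi> u" using de by (simp add: deformed_exp_def)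
  define V where "V i = {u. \<phi> (u - u0 i) < \<delta> \<and> \<delta> * \<phi> u > \<phi> (u - u0 i)}" for i
  obtain x0 where x0: "\<And>x. x \<ge> x0 \<Longrightarrow> \<phi> x \<ge> \<delta>" using de_big[OF de] by blast
  have Vbd: "u < x0 + u0 i" if "u \<in> V i" for u i
  proof (rule ccontr)
    assume "\<not> u < x0 + u0 i"
    hence "\<phi> (u - u0 i) \<ge> \<delta>" by (intro x0) simp
    thus False using that by (simp add: V_def)
  qed
  have bdd: "bdd_above (V i)" for i
    using Vbd by (meson bdd_aboveI less_imp_le)
  have Vhalf: "\<phi> u < 1/2" if "u \<in> V i" "i \<ge> 1" "i \<notin> E" for u i
  proof (rule ccontr)
    assume "\<not> \<phi> u < 1/2"
    hence "\<exists>B c. finite B \<and> B \<subseteq> {1..} \<and> B \<inter> E = {} \<and> 1/2 \<le> (\<Sum>i\<in>B. \<phi> (c i))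
            \<and> (\<Sum>i\<in>B. \<phi> (c i - u0 i)) \<le> \<delta>"
      using that by (intro exI[of _ "{i}"] exI[of _ "\<lambda>_. u"]) (auto simp: V_def)
    with N show False by (rule notE)
  qed
  have key: "(\<Sum>i\<in>F. \<phi> (w i)) < 1/2"
    if F: "finite F" "F \<subseteq> {1..} - E" "\<forall>i\<in>F. w i \<in> V i" for F w
  proof (rule ccontr)
    assume "\<not> (\<Sum>i\<in>F. \<phi> (w i)) < 1/2"
    hence "1/2 \<le> (\<Sum>i\<in>F. \<phi> (w i))" by simp
    moreover have "\<forall>i\<in>F. 0 \<le> \<phi> (w i) \<and> \<phi> (w i) < 1/2"
      using F Vhalf nn by auto
    ultimately obtain B' where B': "B' \<subseteq> F" "1/2 \<le> (\<Sum>i\<in>B'. \<phi> (w i))" "(\<Sum>i\<in>B'. \<phi> (w i)) \<le> 1"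
      using prefix_sum[of F "\<lambda>i. \<phi> (w i)"] F by blast
    have "(\<Sum>i\<in>B'. \<phi> (w i - u0 i)) \<le> (\<Sum>i\<in>B'. \<delta> * \<phi> (w i))"
      using B'(1) F by (intro sum_mono) (auto simp: V_def less_imp_le)
    also have "\<dots> = \<delta> * (\<Sum>i\<in>B'. \<phi> (w i))" by (simp add: sum_distrib_left)
    also have "\<dots> \<le> \<delta> * 1" using B'(3) d0 by (intro mult_left_mono) auto
    finally have "(\<Sum>i\<in>B'. \<phi> (w i - u0 i)) \<le> \<delta>" by simp
    moreover have "finite B'" "B' \<subseteq> {1..}" "B' \<inter> E = {}" using B'(1) F finite_subset by auto
    ultimately have "\<exists>B c. finite B \<and> B \<subseteq> {1..} \<and> B \<inter> E = {} \<and> 1/2 \<le> (\<Sum>i\<in>B. \<phi> (c i))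
            \<and> (\<Sum>i\<in>B. \<phi> (c i - u0 i)) \<le> \<delta>"
      using B'(2) by (intro exI[of _ B'] exI[of _ w]) auto
    with N show False by (rule notE)
  qed
  define c where "c i = (if i \<in> E then ereal (x0 + u0 i) else if V i = {} then - \<infinity> else ereal (Sup (V i)))" for i
  have viol: "\<delta> * \<phi> u \<le> \<phi> (u - u0 i)" if "ereal u > c i" "\<phi> (u - u0 i) < \<delta>" for i u
  proof (cases "i \<in> E")
    case True
    hence "u > x0 + u0 i" using that by (simp add: c_def)
    hence "\<phi> (u - u0 i) \<ge> \<delta>" by (intro x0) simp
    thus ?thesis using that by simp
  next
    case False
    show ?thesis
    proof (rule ccontr)
      assume "\<not> ?thesis"
      hence uV: "u \<in> V i" using that by (simp add: V_def)
      hence "V i \<noteq> {}" by auto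
      hence "ereal u > ereal (Sup (V i))" using that False by (simp add: c_def)
      moreover have "u \<le> Sup (V i)" using uV bdd by (intro cSup_upper)
      ultimately show False by simp
    qed
  qed
  define K where "K = (\<Sum>i\<in>E. phi_ext \<phi> (c i))"
  have pe_nn: "0 \<le> phi_ext \<phi> x" for x using nn by (simp add: phi_ext_def)
  have fin: "(\<Sum>i\<in>F. ennreal (phi_ext \<phi> (c i))) \<le> ennreal (K + 1/2)" if F: "finite F" "F \<subseteq> {1..}" for F
  proof -
    define G where "G = F - E"
    define G' where "G' = {i\<in>G. V i \<noteq> {}}"
    have fG: "finite G" "finite G'" using F by (auto simp: G_def G'_def)
    have G'sub: "G' \<subseteq> {1..} - E" using F by (auto simp: G_def G'_def)
    have S: "(\<Sum>i\<in>G'. \<phi> (Sup (V i))) \<le> 1/2"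
    proof (rule field_le_epsilon)
      fix e :: real assume e: "0 < e"
      define \<eta> where "\<eta> = e / (real (card G') + 1)"
      have \<eta>: "\<eta> > 0" using e by (simp add: \<eta>_def)
      have "\<forall>i\<in>G'. \<exists>u. u \<in> V i \<and> \<phi> (Sup (V i)) - \<eta> < \<phi> u"
      proof
        fix i assume i: "i \<in> G'"
        hence ne: "V i \<noteq> {}" by (simp add: G'_def)
        have "isCont \<phi> (Sup (V i))" by (rule de_cont[OF de])
        then obtain r where r: "r > 0" "\<And>v. dist v (Sup (V i)) < r \<Longrightarrow> dist (\<phi> v) (\<phi> (Sup (V i))) < \<eta>"
          using \<eta> unfolding continuous_at_eps_delta by blast
        obtain u where u: "u \<in> V i" "Sup (V i) - r < u"
          using less_cSupE[OF _ ne, of "Sup (V i) - r"] r by auto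
        have "u \<le> Sup (V i)" using u bdd by (intro cSup_upper)
        hence "dist u (Sup (V i)) < r" using u by (simp add: dist_real_def)
        hence "dist (\<phi> u) (\<phi> (Sup (V i))) < \<eta>" by (rule r)
        thus "\<exists>u. u \<in> V i \<and> \<phi> (Sup (V i)) - \<eta> < \<phi> u" using u by (auto simp: dist_real_def)
      qed
      then obtain w where w: "\<forall>i\<in>G'. w i \<in> V i \<and> \<phi> (Sup (V i)) - \<eta> < \<phi> (w i)" by metis
      have "(\<Sum>i\<in>G'. \<phi> (Sup (V i))) \<le> (\<Sum>i\<in>G'. \<phi> (w i) + \<eta>)"
        using w by (intro sum_mono) (auto simp: less_imp_le)
      also have "\<dots> = (\<Sum>i\<in>G'. \<phi> (w i)) + real (card G') * \<eta>" by (simp add: sum.distrib)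
      also have "\<dots> \<le> 1/2 + e"
      proof -
        have "(\<Sum>i\<in>G'. \<phi> (w i)) < 1/2" using key[OF fG(2) G'sub] w by auto
        moreover have "real (card G') * \<eta> \<le> e"
          using e by (simp add: \<eta>_def field_simps)
        ultimately show ?thesis by simp
      qed
      finally show "(\<Sum>i\<in>G'. \<phi> (Sup (V i))) \<le> 1/2 + e" .
    qed
    have "(\<Sum>i\<in>G. phi_ext \<phi> (c i)) = (\<Sum>i\<in>G'. \<phi> (Sup (V i)))"
      by (rule sum.mono_neutral_cong_right) (use fG in \<open>auto simp: G'_def G_def c_def phi_ext_def\<close>)
    hence SG: "(\<Sum>i\<in>G. phi_ext \<phi> (c i)) \<le> 1/2" using S by simp
    have SE: "(\<Sum>i\<in>F \<inter> E. phi_ext \<phi> (c i)) \<le> K"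
      unfolding K_def using fE pe_nn by (intro sum_mono2) auto
    have "(\<Sum>i\<in>F. ennreal (phi_ext \<phi> (c i))) = ennreal (\<Sum>i\<in>F. phi_ext \<phi> (c i))"
      using pe_nn by simp
    also have "(\<Sum>i\<in>F. phi_ext \<phi> (c i)) = (\<Sum>i\<in>F \<inter> E. phi_ext \<phi> (c i)) + (\<Sum>i\<in>G. phi_ext \<phi> (c i))"
      unfolding G_def using F by (simp add: sum.Int_Diff)
    also have "ennreal \<dots> \<le> ennreal (K + 1/2)" using SE SG by (intro ennreal_leI) simp
    finally show ?thesis .
  qed
  have "(\<Sum>\<^sub>\<infinity>i\<in>{1..}. ennreal (phi_ext \<phi> (c i))) \<le> ennreal (K + 1/2)"
    by (rule infsum_le_finite_sums, rule nonneg_summable_on_complete, simp, rule fin)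
  hence lt: "(\<Sum>\<^sub>\<infinity>i\<in>{1..}. ennreal (phi_ext \<phi> (c i))) < \<infinity>"
    by (metis ennreal_less_top infinity_ennreal_def order.strict_trans1)
  have "\<forall>i\<ge>1. c i \<noteq> \<infinity>" by (simp add: c_def)
  hence "\<exists>\<alpha> \<epsilon> (c :: nat \<Rightarrow> ereal). 0 < \<alpha> \<and> \<alpha> < 1 \<and> 0 < \<epsilon> \<and>
             (\<forall>i\<ge>1. c i \<noteq> \<infinity>) \<and>
             (\<Sum>\<^sub>\<infinity>i\<in>{1..}. ennreal (phi_ext \<phi> (c i))) < \<infinity> \<and>
             (\<forall>i\<ge>1. \<forall>u::real. ereal u > c i \<and> \<phi> (u - u0 i) < \<epsilon> \<longrightarrow>
                 \<alpha> * \<phi> u \<le> \<phi> (u - u0 i))"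
    using lt viol d0 d1 by (intro exI[of _ \<delta>] exI[of _ \<delta>] exI[of _ c]) auto
  with H show False by (rule notE)
qed

primrec cum :: "(nat \<Rightarrow> nat set \<Rightarrow> nat set) \<Rightarrow> nat \<Rightarrow> nat set" where
  "cum f 0 = {}"
| "cum f (Suc n) = cum f n \<union> f (Suc n) (cum f n)"

lemma cum_mono: "cum f n \<subseteq> cum f (n + k)"
  by (induction k) auto

theorem mainTheorem10:
  fixes \<phi> :: "real \<Rightarrow> real" and u0 :: "nat \<Rightarrow> real"
  assumes "deformed_exp \<phi>"
    and "\<forall>i\<ge>1. 0 < u0 i"
    and "\<not> (\<exists>\<alpha> \<epsilon> (c :: nat \<Rightarrow> ereal). 0 < \<alpha> \<and> \<alpha> < 1 \<and> 0 < \<epsilon> \<and>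
             (\<forall>i\<ge>1. c i \<noteq> \<infinity>) \<and>
             (\<Sum>\<^sub>\<infinity>i\<in>{1..}. ennreal (phi_ext \<phi> (c i))) < \<infinity> \<and>
             (\<forall>i\<ge>1. \<forall>u::real. ereal u > c i \<and> \<phi> (u - u0 i) < \<epsilon> \<longrightarrow>
                 \<alpha> * \<phi> u \<le> \<phi> (u - u0 i)))"
  shows "\<exists>(A :: nat \<Rightarrow> nat set) (c :: nat \<Rightarrow> nat \<Rightarrow> real).
           (\<forall>n\<ge>1. A n \<subseteq> {1..}) \<and>
           (\<forall>n\<ge>1. \<forall>m\<ge>1. n \<noteq> m \<longrightarrow> A n \<inter> A m = {}) \<and>
           (\<forall>n\<ge>1. 1/2 \<le> (\<Sum>\<^sub>\<infinity>i\<in>A n. ennreal (\<phi> (c n i))) \<and>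
                   (\<Sum>\<^sub>\<infinity>i\<in>A n. ennreal (\<phi> (c n i - u0 i))) \<le> ennreal (1 / 2 ^ n))"
proof -
  have nn: "\<And>u. 0 \<le> \<phi> u" using assms(1) by (simp add: deformed_exp_def)
  define P where "P k E p \<longleftrightarrow> finite (fst p) \<and> fst p \<subseteq> {1..} \<and> fst p \<inter> E = {} \<and>
      1/2 \<le> (\<Sum>i\<in>fst p. \<phi> (snd p i)) \<and> (\<Sum>i\<in>fst p. \<phi> (snd p i - u0 i)) \<le> 1 / 2 ^ k"
    for k :: nat and E :: "nat set" and p :: "nat set \<times> (nat \<Rightarrow> real)"
  define ch where "ch k E = (SOME p. P k E p)" for k E
  have chP: "P k E (ch k E)" if k: "k \<ge> 1" and fE: "finite E" for k E
  proof -
    have "(1::real) / 2 ^ k < 1" using k by simp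
    then obtain B c where "finite B \<and> B \<subseteq> {1..} \<and> B \<inter> E = {} \<and> 1/2 \<le> (\<Sum>i\<in>B. \<phi> (c i))
            \<and> (\<Sum>i\<in>B. \<phi> (c i - u0 i)) \<le> 1 / 2 ^ k"
      using stage[OF assms(1) assms(3), of "1 / 2 ^ k" E] fE by auto
    hence "P k E (B, c)" by (simp add: P_def)
    thus ?thesis unfolding ch_def by (rule someI)
  qed
  define U where "U = cum (\<lambda>k E. fst (ch k E))"
  have finU: "finite (U n)" for n
  proof (induction n)
    case 0 thus ?case by (simp add: U_def)
  next
    case (Suc n)
    have "finite (fst (ch (Suc n) (U n)))" using chP[of "Suc n" "U n"] Suc by (simp add: P_def)
    thus ?case using Suc by (simp add: U_def)
  qed
  define A where "A n = fst (ch n (U (n - 1)))" for n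
  define c where "c n = snd (ch n (U (n - 1)))" for n
  have PA: "P n (U (n - 1)) (A n, c n)" if "n \<ge> 1" for n
    using chP[OF that finU] by (simp add: A_def c_def)
  have AU: "A n \<subseteq> U m" if nm: "1 \<le> n" "n \<le> m" for n m
  proof -
    obtain k where n: "n = Suc k" using nm(1) by (cases n) auto
    have "A n \<subseteq> U n" by (simp add: n A_def U_def)
    also have "U n \<subseteq> U (n + (m - n))" unfolding U_def by (rule cum_mono)
    finally show ?thesis using nm by simp
  qed
  have disj: "A n \<inter> A m = {}" if "1 \<le> n" "n < m" for n m
  proof -
    have "A n \<subseteq> U (m - 1)" using that by (intro AU) auto
    moreover have "A m \<inter> U (m - 1) = {}" using PA[of m] that by (simp add: P_def)
    ultimately show ?thesis by blast
  qed
  have half: "(1/2::ennreal) = ennreal (1/2)" using divide_ennreal[of 1 2] by simp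
  show ?thesis
  proof (intro exI[of _ A] exI[of _ c] conjI allI impI)
    fix n :: nat assume "n \<ge> 1"
    thus "A n \<subseteq> {1..}" using PA[of n] by (simp add: P_def)
  next
    fix n m :: nat assume "n \<ge> 1" "m \<ge> 1" "n \<noteq> m"
    thus "A n \<inter> A m = {}" using disj[of n m] disj[of m n] by (cases "n < m") auto
  next
    fix n :: nat assume n: "n \<ge> 1"
    have P: "finite (A n)" "1/2 \<le> (\<Sum>i\<in>A n. \<phi> (c n i))" "(\<Sum>i\<in>A n. \<phi> (c n i - u0 i)) \<le> 1 / 2 ^ n"
      using PA[OF n] by (simp_all add: P_def)
    have eq: "(\<Sum>\<^sub>\<infinity>i\<in>A n. ennreal (\<phi> (c n i))) = ennreal (\<Sum>i\<in>A n. \<phi> (c n i))"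
      using P(1) nn by simp
    show "1/2 \<le> (\<Sum>\<^sub>\<infinity>i\<in>A n. ennreal (\<phi> (c n i)))"
      unfolding half eq by (rule ennreal_leI[OF P(2)])
    have "(\<Sum>\<^sub>\<infinity>i\<in>A n. ennreal (\<phi> (c n i - u0 i))) = ennreal (\<Sum>i\<in>A n. \<phi> (c n i - u0 i))"
      using P(1) nn by simp
    thus "(\<Sum>\<^sub>\<infinity>i\<in>A n. ennreal (\<phi> (c n i - u0 i))) \<le> ennreal (1 / 2 ^ n)"
      using P(3) by (simp add: ennreal_leI)
  qed
qed

end
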